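(* Let $n$ be a positive integer and let $\lambda$ and $\mu$ be integer partitions of $n$. Then $\mathrm{pre}_2(\lambda) = \mathrm{pre}_2(\mu)$ if and only if $\lambda = \mu$.
   Context: An integer partition $\lambda = (\lambda_1, \dots, \lambda_\ell)$ of a positive integer $n$ is a weakly decreasing finite sequence of positive integers whose sum is $n$; the $\lambda_i$ are its parts and $\ell(\lambda)=\ell$ is its length. For a partition $\lambda = (\lambda_1,\dots,\lambda_\ell)$, $\mathrm{pre}_2(\lambda)$ denotes the partition whose multiset of parts is the multiset $\{\!\{\lambda_i\lambda_j : 1 \le i < j \le \ell\}\!\}$ (with multiplicities, arranged in weakly decreasing order); if $\ell < 2$ it is the empty partition. *)

theory Defs
  imports Main "HOL-Library.Multiset"
begin

definition is_partition :: "nat \<Rightarrow> nat list \<Rightarrow> bool" where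
  "is_partition n lam \<longleftrightarrow> sorted_wrt (\<ge>) lam \<and> (\<forall>x\<in>set lam. 0 < x) \<and> sum_list lam = n"

definition pre2_mset :: "nat list \<Rightarrow> nat multiset" where
  "pre2_mset lam = mset [lam ! i * lam ! j. i \<leftarrow> [0..<length lam], j \<leftarrow> [Suc i..<length lam]]"

definition pre2 :: "nat list \<Rightarrow> nat list" where
  "pre2 lam = rev (sorted_list_of_multiset (pre2_mset lam))"

end

theory Submission
  imports Defs
begin
lemma pre2_cons: "pre2_mset (x#xs) = image_mset ((*) x) (mset xs) + pre2_mset xs"
proof -
  have u: "[0..<Suc L] = 0 # map Suc [0..<L]" for L by (simp add: upt_conv_Cons map_Suc_upt)
  have v: "[Suc i..<Suc L] = map Suc [i..<L]" for i L by (simp add: map_Suc_upt)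
  have w: "map (\<lambda>j. x * xs ! j) [0..<length xs] = map ((*) x) xs"
    by (rule nth_equalityI) auto
  show ?thesis unfolding pre2_mset_def
    apply (simp only: length_Cons u v list.map concat.simps map_map comp_def nth_Cons_Suc nth_Cons_0 w)
    apply (simp add: v[symmetric])
    done
qed

definition ps :: "nat \<Rightarrow> nat multiset \<Rightarrow> nat" where
  "ps k A = (\<Sum>x\<in>#A. x ^ k)"

lemma ps_ident: "2 * ps k (pre2_mset xs) + ps (2*k) (mset xs) = (ps k (mset xs))^2"
proof (induction xs)
  case Nil
  then show ?case by (simp add: ps_def pre2_mset_def)
next
  case (Cons x xs)
  have a: "ps k (image_mset ((*) x) (mset xs)) = x^k * ps k (mset xs)"
    unfolding ps_def by (simp add: power_mult_distrib sum_mset_distrib_left image_mset.compositionality comp_def)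
  have b: "ps k (pre2_mset (x#xs)) = x^k * ps k (mset xs) + ps k (pre2_mset xs)"
    unfolding pre2_cons using a by (simp add: ps_def)
  have c: "ps j (mset (x#xs)) = x^j + ps j (mset xs)" for j by (simp add: ps_def)
  have alg: "2*Q+R = P^2 \<Longrightarrow> 2*(y*P+Q) + (y^2 + R) = (y+P)^2" for Q R P y :: nat
    by (simp add: power2_eq_square algebra_simps)
  have "x^(2*k) = (x^k)^2" by (simp add: power_mult mult.commute)
  then show ?case unfolding b c using alg Cons.IH by metis
qed

lemma bern: "(b::nat)^N * (b + N) \<le> (b+1)^N * b"
proof (induction N)
  case 0 then show ?case by simp
next
  case (Suc N)
  have "b^(Suc N) * (b + Suc N) \<le> (b+1) * (b^N * (b+N))"
    by (simp add: algebra_simps)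
  also have "\<dots> \<le> (b+1) * ((b+1)^N * b)" using Suc.IH by (rule mult_left_mono) simp
  finally show ?case by (simp add: algebra_simps)
qed

lemma exists_big: "0 < (a::nat) \<Longrightarrow> \<exists>m. K * (a-1)^(2^m) < a^(2^m)"
proof (cases "a = 1")
  case True then show ?thesis by (intro exI[of _ 0]) simp
next
  case False
  assume "0 < a"
  define b where "b = a - 1"
  have b: "0 < b" "a = b + 1" using False \<open>0 < a\<close> b_def by auto
  define m where "m = K * b"
  have mlt: "K * b < 2^m" unfolding m_def by (rule less_exp)
  have "K * b^(2^m) * b = b^(2^m) * (K * b)" by (simp add: algebra_simps)
  also have "\<dots> < b^(2^m) * (b + 2^m)" using mlt b by (intro mult_strict_left_mono) auto
  also have "\<dots> \<le> (b+1)^(2^m) * b" by (rule bern)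
  finally have "(K * b^(2^m)) * b < (b+1)^(2^m) * b" .
  then have "K * b^(2^m) < (b+1)^(2^m)" using mult_less_cancel2 by blast
  then have "K * (a-1)^(2^m) < a^(2^m)" using b by simp
  then show ?thesis by blast
qed

lemma split_sum: "(\<Sum>x\<in>#A. f x) = (\<Sum>x\<in>#filter_mset (\<lambda>x. x \<noteq> a) A. f x) + count A a * (f a::nat)"
proof -
  have e: "A = filter_mset (\<lambda>x. x \<noteq> a) A + filter_mset (\<lambda>x. \<not> x \<noteq> a) A"
    by (rule multiset_partition)
  have "(\<Sum>x\<in>#A. f x) = (\<Sum>x\<in>#filter_mset (\<lambda>x. x \<noteq> a) A + filter_mset (\<lambda>x. \<not> x \<noteq> a) A. f x)"
    using e by (rule arg_cong)
  also have "\<dots> = (\<Sum>x\<in>#filter_mset (\<lambda>x. x \<noteq> a) A. f x) + (\<Sum>x\<in>#filter_mset (\<lambda>x. x = a) A. f x)"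
    by (simp only: image_mset_union sum_mset.union not_not)
  also have "\<dots> = (\<Sum>x\<in>#filter_mset (\<lambda>x. x \<noteq> a) A. f x) + count A a * f a"
    by (simp add: filter_eq_replicate_mset)
  finally show ?thesis .
qed

lemma dom:
  assumes "\<forall>x\<in>#B. x \<le> a" "count B a < count A a" "0 < a"
  shows "\<exists>m. ps (2^m) B < ps (2^m) A"
proof -
  define B' where "B' = filter_mset (\<lambda>x. x \<noteq> a) B"
  obtain m where m: "size B' * (a-1)^(2^m) < a^(2^m)" using exists_big assms(3) by blast
  let ?N = "2^m::nat"
  have "(\<Sum>x\<in>#B'. x^?N) \<le> (\<Sum>x\<in>#B'. (a-1)^?N)"
    by (rule sum_mset_mono) (use assms(1) in \<open>auto simp: B'_def intro!: power_mono\<close>)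
  also have "\<dots> = size B' * (a-1)^?N" by (simp add: sum_mset_constant)
  finally have bb: "(\<Sum>x\<in>#B'. x^?N) < a^?N" using m by linarith
  have "ps ?N B = (\<Sum>x\<in>#B'. x^?N) + count B a * a^?N" unfolding ps_def B'_def by (rule split_sum)
  also have "\<dots> < (count B a + 1) * a^?N" using bb by simp
  also have "\<dots> \<le> count A a * a^?N" using assms(2) by (intro mult_right_mono) auto
  also have "\<dots> \<le> ps ?N A" unfolding ps_def by (subst split_sum[of _ A a]) simp
  finally show ?thesis by blast
qed
lemma decomp: "A = filter_mset (\<lambda>x. x \<noteq> a) A + replicate_mset (count A a) a"
proof -
  have e: "A = filter_mset (\<lambda>x. x \<noteq> a) A + filter_mset (\<lambda>x. \<not> x \<noteq> a) A"
    by (rule multiset_partition)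
  then show ?thesis by (simp only: not_not filter_eq_replicate_mset)
qed

lemma pow_inj:
  fixes A B :: "nat multiset"
  assumes "0 \<notin># A" "0 \<notin># B" "\<forall>m. ps (2^m) A = ps (2^m) B"
  shows "A = B"
  using assms
proof (induction "size A + size B" arbitrary: A B rule: less_induct)
  case less
  show ?case
  proof (cases "A + B = {#}")
    case True then show ?thesis by simp
  next
    case False
    define a where "a = Max (set_mset (A + B))"
    have ain: "a \<in># A + B" unfolding a_def using False
      by (metis Max_in finite_set_mset set_mset_eq_empty_iff)
    have ale: "x \<le> a" if "x \<in># A + B" for x unfolding a_def using that by simp
    have apos: "0 < a" using ain less.prems(1,2) by (metis gr0I union_iff)
    have ceq: "count A a = count B a"
    proof (rule ccontr)
      assume "count A a \<noteq> count B a"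
      then consider "count B a < count A a" | "count A a < count B a" by linarith
      then show False
      proof cases
        case 1
        then obtain m where "ps (2^m) B < ps (2^m) A" using dom[of B a A] ale apos by auto
        then show False using less.prems(3) by simp
      next
        case 2
        then obtain m where "ps (2^m) A < ps (2^m) B" using dom[of A a B] ale apos by auto
        then show False using less.prems(3) by simp
      qed
    qed
    define A' where "A' = filter_mset (\<lambda>x. x \<noteq> a) A"
    define B' where "B' = filter_mset (\<lambda>x. x \<noteq> a) B"
    have aA: "a \<in># A" and aB: "a \<in># B" using ain ceq
      by (metis count_eq_zero_iff union_iff)+
    have dA: "A = A' + replicate_mset (count A a) a" unfolding A'_def by (rule decomp)
    have dB: "B = B' + replicate_mset (count B a) a" unfolding B'_def by (rule decomp)
    have "size A = size A' + count A a" using arg_cong[OF dA, of size] by simp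
    then have sA: "size A' < size A" using aA by simp
    have "size B = size B' + count B a" using arg_cong[OF dB, of size] by simp
    then have sB: "size B' < size B" using aB by simp
    have eq': "ps (2^m) A' = ps (2^m) B'" for m
    proof -
      have "ps (2^m) A' + count A a * a^(2^m) = ps (2^m) B' + count B a * a^(2^m)"
        using less.prems(3) split_sum[of "\<lambda>x. x^(2^m)" A a] split_sum[of "\<lambda>x. x^(2^m)" B a]
        unfolding ps_def A'_def B'_def by simp
      then show ?thesis using ceq by simp
    qed
    have "A' = B'"
      by (rule less.hyps) (use sA sB eq' less.prems in \<open>auto simp: A'_def B'_def\<close>)
    then show ?thesis using dA dB ceq by simp
  qed
qed

lemma pre2_eq_mset: "pre2 lam = pre2 mu \<Longrightarrow> pre2_mset lam = pre2_mset mu"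
  unfolding pre2_def by (metis mset_sorted_list_of_multiset rev_rev_ident)

theorem theorem1:
  fixes n :: nat and lam mu :: "nat list"
  assumes "0 < n" and "is_partition n lam" and "is_partition n mu"
  shows "pre2 lam = pre2 mu \<longleftrightarrow> lam = mu"
proof
  assume "lam = mu" then show "pre2 lam = pre2 mu" by simp
next
  assume h: "pre2 lam = pre2 mu"
  then have P: "pre2_mset lam = pre2_mset mu" by (rule pre2_eq_mset)
  have pw: "ps (2^m) (mset lam) = ps (2^m) (mset mu)" for m
  proof (induction m)
    case 0
    have "ps 1 (mset xs) = sum_list xs" for xs by (simp add: ps_def sum_mset_sum_list)
    then show ?case using assms(2,3) by (simp add: is_partition_def)
  next
    case (Suc m)
    have "2 * ps (2^m) (pre2_mset lam) + ps (2*2^m) (mset lam) = (ps (2^m) (mset lam))^2"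
      by (rule ps_ident)
    moreover have "2 * ps (2^m) (pre2_mset mu) + ps (2*2^m) (mset mu) = (ps (2^m) (mset mu))^2"
      by (rule ps_ident)
    ultimately show ?case using Suc.IH P by simp
  qed
  have "mset lam = mset mu"
    by (rule pow_inj) (use assms(2,3) pw in \<open>auto simp: is_partition_def\<close>)
  then have m: "mset (rev lam) = mset (rev mu)" by simp
  have s1: "sorted (rev lam)" and s2: "sorted (rev mu)" using assms(2,3)
    by (auto simp: is_partition_def sorted_wrt_rev)
  have "rev lam = rev mu"
    using properties_for_sort[OF m s1] properties_for_sort[OF refl s2] by simp
  then show "lam = mu" by simp
qed
end
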